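(* Let $d>k\geq1$, $\varepsilon\in(0,1)$, $A\succeq0$ symmetric with $\lambda_k>\lambda_{k+1}$, $\beta>0$ with $\lambda_k>2\sqrt\beta\geq\lambda_{k+1}$, $X_0\in\mathrm{St}(d,k)$ with $\cos\theta_k(U_k,X_0)>0$, and ANPM perturbations satisfying for all $t\geq0$: $\|U_{-k}^\top\Xi_t\|_2\leq c(\lambda_k-2\sqrt\beta)\varepsilon$ and $\|U_k^\top\Xi_t\|_2\leq c(\lambda_k-2\sqrt\beta)\cos\theta_k(U_k,X_t)$, $c=1/32$. Then for all $t\geq0$, $$\|G_t\|_2\leq\frac{r_+^t+\kappa r_-^t}{r_+^{t+1}+\kappa r_-^{t+1}},$$ where $r_\pm:=\frac{(1-c\Delta)\pm\sqrt{(1-c\Delta)^2-4\beta/\lambda_k^2}}{2}$ and $\kappa:=1+\frac{2c\Delta}{\sqrt{(1-c\Delta)^2-4\beta/\lambda_k^2}-c\Delta}$. Furthermore $\kappa\leq16/15$.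
   Context: $A$ has eigenvalues $\lambda_1\geq\dots\geq\lambda_d\geq0$, orthonormal eigenvectors $u_i$; $U_k:=[u_1..u_k]$, $U_{-k}:=[u_{k+1}..u_d]$, $\Lambda_k:=\mathrm{diag}(\lambda_1..\lambda_k)$. $\Delta:=(\lambda_k-2\sqrt\beta)/\lambda_k$. QR: $Y=XR$, $X^\top X=I_k$, $R$ upper triangular, nonnegative diagonal; $\theta_k(U,X):=\arccos\sigma_{\min}(U^\top X)$. ANPM: $(X_1,R_1)=\mathrm{QR}(\tfrac12AX_0+\Xi_0)$; for $t\geq1$, $Y_{t+1}=AX_t-\beta X_{t-1}R_t^{-1}+\Xi_t$, $(X_{t+1},R_{t+1})=\mathrm{QR}(Y_{t+1})$. $E_t:=\Lambda_k^{-1}(U_k^\top\Xi_t)(U_k^\top X_t)^{-1}$; $G_0:=(I_k/2+E_0)^{-1}$, $G_{t+1}:=(I_k-\beta\Lambda_k^{-1}G_t\Lambda_k^{-1}+E_{t+1})^{-1}$. *)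

theory Defs
  imports "HOL-Analysis.Analysis"
begin

definition spnorm :: "real^'n^'m \<Rightarrow> real" where
  "spnorm M = onorm (\<lambda>x. M *v x)"

definition sigma_min :: "real^'n^'n \<Rightarrow> real" where
  "sigma_min M = Inf {norm (M *v x) | x. norm x = 1}"

definition theta_k :: "real^'k^'d \<Rightarrow> real^'k^'d \<Rightarrow> real" where
  "theta_k U X = arccos (sigma_min (transpose U ** X))"

definition diagm :: "('k \<Rightarrow> real) \<Rightarrow> real^'k^'k" where
  "diagm l = (\<chi> i j. if i = j then l i else 0)"

definition is_QR :: "real^('k::{finite,linorder})^('d::finite) \<Rightarrow> real^('k::{finite,linorder})^('d::finite) \<Rightarrow> real^('k::{finite,linorder})^('k::{finite,linorder}) \<Rightarrow> bool" where
  "is_QR Y X R \<longleftrightarrow> Y = X ** R \<and> transpose X ** X = mat 1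
     \<and> (\<forall>i j. j < i \<longrightarrow> R $ i $ j = 0) \<and> (\<forall>i. R $ i $ i \<ge> 0)"

fun Gseq :: "real^'k^'k \<Rightarrow> real \<Rightarrow> (nat \<Rightarrow> real^'k^'k) \<Rightarrow> nat \<Rightarrow> real^'k^'k" where
  "Gseq Lam \<beta> E 0 = matrix_inv ((1/2) *\<^sub>R mat 1 + E 0)"
| "Gseq Lam \<beta> E (Suc t) = matrix_inv (mat 1 - \<beta> *\<^sub>R (matrix_inv Lam ** Gseq Lam \<beta> E t ** matrix_inv Lam) + E (Suc t))"

end

theory Submission
  imports Defs
begin


lemma spn_apply: "norm ((M::real^'n^'m) *v x) \<le> spnorm M * norm x"
  unfolding spnorm_def by (rule onorm) simp

lemma spn_le: assumes "\<And>x. norm ((M::real^'n^'m) *v x) \<le> b * norm x" shows "spnorm M \<le> b"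
  unfolding spnorm_def by (rule onorm_le) (rule assms)

lemma spn_nonneg: "0 \<le> spnorm (M::real^'n^'m)"
  unfolding spnorm_def by (rule onorm_pos_le) simp

lemma spn_mult: "spnorm ((A::real^'n^'m) ** (B::real^'k^'n)) \<le> spnorm A * spnorm B"
proof (rule spn_le)
  fix x
  have "norm ((A ** B) *v x) = norm (A *v (B *v x))" by (simp add: matrix_vector_mul_assoc)
  also have "\<dots> \<le> spnorm A * norm (B *v x)" by (rule spn_apply)
  also have "\<dots> \<le> spnorm A * (spnorm B * norm x)"
    by (rule mult_left_mono[OF spn_apply spn_nonneg])
  finally show "norm ((A ** B) *v x) \<le> spnorm A * spnorm B * norm x" by simp
qed

lemma inner_transpose: "inner ((A::real^'n^'m) *v x) y = inner x (transpose A *v y)"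
  by (metis dot_lmul_matrix vector_transpose_matrix)

lemma inv_bound:
  fixes M :: "real^'n^'n"
  assumes m: "m > 0" and h: "\<And>x. m * norm x \<le> norm (M *v x)"
  shows "M ** matrix_inv M = mat 1" "matrix_inv M ** M = mat 1" "spnorm (matrix_inv M) \<le> 1/m"
proof -
  have "inj ((*v) M)"
  proof (rule injI)
    fix x y assume "M *v x = M *v y"
    hence "M *v (x - y) = 0" by (simp add: matrix_vector_mult_diff_distrib)
    hence "m * norm (x - y) \<le> 0" using h[of "x-y"] by simp
    thus "x = y" using m by (simp add: mult_le_0_iff)
  qed
  then obtain B where B: "B ** M = mat 1" using matrix_left_invertible_injective by blast
  hence "M ** B = mat 1" using matrix_left_right_inverse by blast
  hence ex: "\<exists>A'. M ** A' = mat 1 \<and> A' ** M = mat 1" using B by blast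
  have inv: "M ** matrix_inv M = mat 1 \<and> matrix_inv M ** M = mat 1"
    unfolding matrix_inv_def by (rule someI_ex[OF ex])
  thus "M ** matrix_inv M = mat 1" "matrix_inv M ** M = mat 1" by auto
  show "spnorm (matrix_inv M) \<le> 1/m"
  proof (rule spn_le)
    fix y
    have "M *v (matrix_inv M *v y) = y" using inv by (simp add: matrix_vector_mul_assoc)
    hence "m * norm (matrix_inv M *v y) \<le> norm y" using h[of "matrix_inv M *v y"] by simp
    thus "norm (matrix_inv M *v y) \<le> 1 / m * norm y" using m by (simp add: field_simps)
  qed
qed

lemma orth_isometry:
  assumes "transpose X ** X = mat 1"
  shows "norm ((X::real^'k^'d) *v x) = norm x"
proof -
  have "inner (X *v x) (X *v x) = inner x x"
    by (simp add: inner_transpose matrix_vector_mul_assoc assms)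
  thus ?thesis by (simp add: norm_eq_sqrt_inner)
qed

lemma orth_contract:
  assumes "transpose U ** U = mat 1"
  shows "norm (transpose (U::real^'k^'d) *v v) \<le> norm v"
proof -
  let ?w = "U *v (transpose U *v v)"
  have "norm ?w = norm (transpose U *v v)" by (rule orth_isometry[OF assms])
  have "(norm (transpose U *v v))^2 = inner (transpose U *v v) (transpose U *v v)"
    by (simp add: power2_norm_eq_inner)
  also have "\<dots> = inner v ?w" using inner_transpose[of "transpose U" v] by simp
  also have "\<dots> \<le> norm v * norm ?w" by (rule norm_cauchy_schwarz)
  finally have "(norm (transpose U *v v))^2 \<le> norm v * norm (transpose U *v v)"
    using \<open>norm ?w = _\<close> by simp
  thus ?thesis
    by (metis mult_le_cancel_right norm_ge_zero power2_eq_square less_eq_real_def not_le mult_right_mono)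
qed

lemma sm_set_ne: "{norm ((M::real^'n^'n) *v x) | x. norm x = 1} \<noteq> {}"
proof -
  obtain x :: "real^'n" where "norm x = 1" using vector_choose_size[of 1] by auto
  thus ?thesis by blast
qed

lemma sm_bdd: "bdd_below {norm ((M::real^'n^'n) *v x) | x. norm x = 1}"
  by (rule bdd_belowI[of _ 0]) auto

lemma sm_nonneg: "0 \<le> sigma_min (M::real^'n^'n)"
  unfolding sigma_min_def by (rule cInf_greatest[OF sm_set_ne]) auto

lemma sm_le1: assumes "\<And>x. norm ((M::real^'n^'n) *v x) \<le> norm x" shows "sigma_min M \<le> 1"
proof -
  obtain x :: "real^'n" where x: "norm x = 1" using vector_choose_size[of 1] by auto
  have "sigma_min M \<le> norm (M *v x)" unfolding sigma_min_def
    by (rule cInf_lower[OF _ sm_bdd]) (use x in blast)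
  also have "\<dots> \<le> 1" using assms[of x] x by simp
  finally show ?thesis .
qed

lemma sm_lower: "sigma_min (M::real^'n^'n) * norm x \<le> norm (M *v x)"
proof (cases "x = 0")
  case True thus ?thesis by simp
next
  case False
  let ?u = "(1 / norm x) *\<^sub>R x"
  have u: "norm ?u = 1" using False by simp
  have "sigma_min M \<le> norm (M *v ?u)" unfolding sigma_min_def
    by (rule cInf_lower[OF _ sm_bdd]) (use u in blast)
  also have "\<dots> = norm (M *v x) / norm x" by (simp add: matrix_vector_mult_scaleR)
  finally show ?thesis using False by (simp add: field_simps)
qed

lemma diag_lower:
  assumes l0: "0 \<le> l" and li: "\<And>i. l \<le> lam i"
  shows "l * norm x \<le> norm (diagm lam *v x)"
proof -
  have e: "diagm lam *v x = (\<chi> i. lam i * x $ i)"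
  proof -
    have "\<And>i. (\<Sum>j\<in>UNIV. (if i = j then lam i else 0) * x $ j) = lam i * x $ i"
    proof -
      fix i
      have "(\<Sum>j\<in>UNIV. (if i = j then lam i else 0) * x $ j) = (\<Sum>j\<in>UNIV. if i = j then lam i * x $ j else 0)"
        by (rule sum.cong) auto
      thus "(\<Sum>j\<in>UNIV. (if i = j then lam i else 0) * x $ j) = lam i * x $ i" by simp
    qed
    thus ?thesis by (simp add: diagm_def matrix_vector_mult_def vec_eq_iff)
  qed
  have "(l * norm x)^2 = (\<Sum>i\<in>UNIV. l^2 * (x$i)^2)"
  proof -
    have "(l * norm x)^2 = l^2 * inner x x" by (simp add: power_mult_distrib power2_norm_eq_inner)
    also have "\<dots> = (\<Sum>i\<in>UNIV. l^2 * (x$i)^2)"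
      by (simp add: inner_vec_def sum_distrib_left power2_eq_square)
    finally show ?thesis .
  qed
  also have "\<dots> \<le> (\<Sum>i\<in>UNIV. (lam i * x$i)^2)"
  proof (rule sum_mono)
    fix i
    have "l^2 \<le> (lam i)^2" using l0 li[of i] by (simp add: power_mono)
    thus "l^2 * (x$i)^2 \<le> (lam i * x$i)^2" by (simp add: power_mult_distrib mult_right_mono)
  qed
  also have "\<dots> = (norm (diagm lam *v x))^2"
    unfolding e power2_norm_eq_inner by (simp add: inner_vec_def power2_eq_square)
  finally show ?thesis by (rule power2_le_imp_le) simp
qed



lemma scalars:
  fixes lk \<beta> c \<Delta> rp rm \<kappa> :: real
  assumes b0: "\<beta> > 0" and lk: "lk > 2 * sqrt \<beta>" and c: "c = 1/32"
    and D: "\<Delta> = (lk - 2 * sqrt \<beta>) / lk"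
    and rp: "rp = ((1 - c*\<Delta>) + sqrt ((1 - c*\<Delta>)^2 - 4*\<beta>/lk^2)) / 2"
    and rm: "rm = ((1 - c*\<Delta>) - sqrt ((1 - c*\<Delta>)^2 - 4*\<beta>/lk^2)) / 2"
    and k: "\<kappa> = 1 + 2*c*\<Delta> / (sqrt ((1 - c*\<Delta>)^2 - 4*\<beta>/lk^2) - c*\<Delta>)"
  shows "0 < \<Delta>" "\<Delta> \<le> 1" "\<kappa> \<le> 16/15" "0 < \<kappa>" "0 < rp" "0 \<le> rm"
    "rp + rm = 1 - c*\<Delta>" "rp * rm = \<beta> / lk^2"
    "rp + \<kappa> * rm = (1/2 - c*\<Delta>) * (1 + \<kappa>)"
proof -
  define q where "q = 2 * sqrt \<beta> / lk"
  have sb: "sqrt \<beta> > 0" using b0 by simp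
  have lk0: "lk > 0" using lk sb by linarith
  have q0: "0 < q" unfolding q_def using sb lk0 by simp
  have q1: "q < 1" unfolding q_def using lk lk0 by simp
  have Dq: "\<Delta> = 1 - q" unfolding D q_def using lk0 by (simp add: field_simps)
  have qq: "4*\<beta>/lk^2 = q^2" unfolding q_def using b0
    by (simp add: power_divide power_mult_distrib)
  define a where "a = 1 - c*\<Delta>"
  define S where "S = sqrt (a^2 - q^2)"
  show "0 < \<Delta>" "\<Delta> \<le> 1" using Dq q0 q1 by auto
  have aq: "a - q = (1 - c) * \<Delta>" unfolding a_def Dq by (simp add: algebra_simps)
  have a0: "a > 0" unfolding a_def c using Dq q0 q1 by simp
  have aq0: "a - q > 0" using aq c Dq q1 by simp
  have nn: "a^2 - q^2 \<ge> 0"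
  proof -
    have "a^2 - q^2 = (a - q) * (a + q)" by (simp add: power2_eq_square algebra_simps)
    moreover have "(a - q) * (a + q) \<ge> 0" using aq0 a0 q0 by simp
    ultimately show ?thesis by linarith
  qed
  have Sq: "S^2 = a^2 - q^2" unfolding S_def by (rule real_sqrt_pow2[OF nn])
  have S0: "S \<ge> 0" unfolding S_def using nn by simp
  have Sa: "S \<le> a"
  proof -
    have "S \<le> sqrt (a^2)" unfolding S_def by (rule real_sqrt_le_mono) simp
    thus ?thesis using a0 by simp
  qed
  have dif: "S^2 - (31*c*\<Delta>)^2 = (31/32)*\<Delta>*(2-2*\<Delta>)"
  proof -
    have qD: "q = 1 - \<Delta>" using Dq by simp
    show ?thesis unfolding Sq a_def qD c by (simp add: power2_eq_square algebra_simps)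
  qed
  have "0 \<le> (31/32)*\<Delta>*(2-2*\<Delta>)" using Dq q0 q1 by simp
  hence "(31*c*\<Delta>)^2 \<le> S^2" using dif by simp
  hence S31: "31*c*\<Delta> \<le> S" using S0 by (rule power2_le_imp_le)
  have cD0: "c*\<Delta> > 0" using c Dq q1 by simp
  have Sc: "S - c*\<Delta> > 0" using S31 cD0 by linarith
  have SS: "sqrt ((1 - c*\<Delta>)^2 - 4*\<beta>/lk^2) = S" unfolding S_def a_def qq ..
  have kk: "\<kappa> = (S + c*\<Delta>) / (S - c*\<Delta>)" unfolding k SS using Sc by (simp add: field_simps)
  have kk2: "\<kappa> * (S - c*\<Delta>) = S + c*\<Delta>" unfolding kk using Sc by simp
  show "\<kappa> \<le> 16/15" unfolding kk using Sc S31 by (simp add: field_simps)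
  show "0 < \<kappa>" unfolding kk using Sc cD0 by simp
  have rp': "rp = (a + S)/2" unfolding rp SS a_def ..
  have rm': "rm = (a - S)/2" unfolding rm SS a_def ..
  show "0 < rp" unfolding rp' using a0 S0 by simp
  show "0 \<le> rm" unfolding rm' using Sa by simp
  show "rp + rm = 1 - c*\<Delta>" unfolding rp' rm' a_def by (simp add: field_simps)
  have "rp * rm = (a^2 - S^2)/4" unfolding rp' rm' by (simp add: power2_eq_square algebra_simps)
  also have "\<dots> = q^2/4" using Sq by simp
  also have "\<dots> = \<beta> / lk^2" using qq[symmetric] by simp
  finally show "rp * rm = \<beta> / lk^2" .
  have "(rp + \<kappa> * rm) * (S - c*\<Delta>) = rp * (S - c*\<Delta>) + rm * (\<kappa> * (S - c*\<Delta>))"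
    by (simp add: algebra_simps)
  also have "\<dots> = (1/2 - c*\<Delta>) * (2 * S)"
    unfolding kk2 rp' rm' by (simp add: a_def field_simps)
  also have "\<dots> = (1/2 - c*\<Delta>) * ((S - c*\<Delta>) + \<kappa> * (S - c*\<Delta>))"
    unfolding kk2 by simp
  also have "\<dots> = ((1/2 - c*\<Delta>) * (1 + \<kappa>)) * (S - c*\<Delta>)"
    by (simp add: field_simps)
  finally show "rp + \<kappa> * rm = (1/2 - c*\<Delta>) * (1 + \<kappa>)" using Sc by simp
qed


lemma perturb_inv:
  fixes F :: "real^'n^'n"
  assumes "\<And>x. norm (F *v x) \<le> f * norm x" "\<alpha> - f > 0"
  shows "spnorm (matrix_inv (\<alpha> *\<^sub>R mat 1 + F)) \<le> 1/(\<alpha> - f)"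
proof (rule inv_bound(3)[OF assms(2)])
  fix x
  have e: "(\<alpha> *\<^sub>R mat 1 + F) *v x = \<alpha> *\<^sub>R x + F *v x"
    by (simp add: matrix_vector_mult_add_rdistrib scaleR_matrix_vector_assoc[symmetric])
  have "norm (\<alpha> *\<^sub>R x) - norm (F *v x) \<le> norm (\<alpha> *\<^sub>R x + F *v x)"
    by (metis norm_diff_ineq norm_minus_cancel diff_minus_eq_add)
  moreover have "\<alpha> * norm x \<le> norm (\<alpha> *\<^sub>R x)"
    by (simp add: abs_ge_self mult_right_mono)
  ultimately show "(\<alpha> - f) * norm x \<le> norm ((\<alpha> *\<^sub>R mat 1 + F) *v x)"
    using assms(1)[of x] unfolding e by (simp add: algebra_simps)
qed

theorem lemma4:
  fixes A :: "real^'d^'d"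
    and Uk :: "real^('k::{finite,linorder})^'d" and Um :: "real^'m^'d"
    and lam :: "('k::{finite,linorder}) \<Rightarrow> real" and mu :: "'m \<Rightarrow> real"
    and \<beta> \<epsilon> :: real
    and X :: "nat \<Rightarrow> real^('k::{finite,linorder})^'d" and R :: "nat \<Rightarrow> real^('k::{finite,linorder})^('k::{finite,linorder})"
    and Xi :: "nat \<Rightarrow> real^('k::{finite,linorder})^'d"
  defines "lamk \<equiv> Min (range lam)"
    and "lamk1 \<equiv> Max (range mu)"
    and "c \<equiv> (1/32 :: real)"
  defines "\<Delta> \<equiv> (lamk - 2 * sqrt \<beta>) / lamk"
  defines "Lam \<equiv> diagm lam"
  defines "E \<equiv> (\<lambda>t. matrix_inv Lam ** (transpose Uk ** Xi t) ** matrix_inv (transpose Uk ** X t))"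
  defines "rp \<equiv> ((1 - c*\<Delta>) + sqrt ((1 - c*\<Delta>)^2 - 4*\<beta>/lamk^2)) / 2"
    and "rm \<equiv> ((1 - c*\<Delta>) - sqrt ((1 - c*\<Delta>)^2 - 4*\<beta>/lamk^2)) / 2"
    and "\<kappa> \<equiv> 1 + 2*c*\<Delta> / (sqrt ((1 - c*\<Delta>)^2 - 4*\<beta>/lamk^2) - c*\<Delta>)"
  assumes dims: "CARD('k) + CARD('m) = CARD('d)"
    and symA: "transpose A = A"
    and Uk_orth: "transpose Uk ** Uk = mat 1"
    and Um_orth: "transpose Um ** Um = mat 1"
    and UkUm: "transpose Uk ** Um = 0"
    and eig_k: "A ** Uk = Uk ** diagm lam"
    and eig_m: "A ** Um = Um ** diagm mu"
    and lam_sorted: "\<And>i j. i \<le> j \<Longrightarrow> lam j \<le> lam i"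
    and lam_ge_mu: "\<And>i j. mu j \<le> lam i"
    and psd: "\<And>j. mu j \<ge> 0"
    and gap: "lamk > lamk1"
    and eps: "0 < \<epsilon>" "\<epsilon> < 1"
    and beta: "\<beta> > 0" "lamk > 2 * sqrt \<beta>" "2 * sqrt \<beta> \<ge> lamk1"
    and X0: "transpose (X 0) ** X 0 = mat 1"
    and cos0: "cos (theta_k Uk (X 0)) > 0"
    and step1: "is_QR ((1/2) *\<^sub>R (A ** X 0) + Xi 0) (X 1) (R 1)"
    and step: "\<And>t. t \<ge> 1 \<Longrightarrow>
        is_QR (A ** X t - \<beta> *\<^sub>R (X (t - 1) ** matrix_inv (R t)) + Xi t) (X (t + 1)) (R (t + 1))"
    and noise_m: "\<And>t. spnorm (transpose Um ** Xi t) \<le> c * (lamk - 2 * sqrt \<beta>) * \<epsilon>"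
    and noise_k: "\<And>t. spnorm (transpose Uk ** Xi t) \<le> c * (lamk - 2 * sqrt \<beta>) * cos (theta_k Uk (X t))"
  shows "(\<forall>t. spnorm (Gseq Lam \<beta> E t) \<le> (rp^t + \<kappa> * rm^t) / (rp^(t+1) + \<kappa> * rm^(t+1)))
         \<and> \<kappa> \<le> 16/15"
proof -
  have cc: "c = 1/32" unfolding c_def ..
  note sc = scalars[OF beta(1) beta(2) cc \<Delta>_def[THEN meta_eq_to_obj_eq] rp_def[THEN meta_eq_to_obj_eq]
     rm_def[THEN meta_eq_to_obj_eq] \<kappa>_def[THEN meta_eq_to_obj_eq]]
  have sb: "sqrt \<beta> > 0" using beta(1) by simp
  have lk0: "lamk > 0" using beta(2) sb by linarith
  have lkD: "lamk - 2 * sqrt \<beta> = lamk * \<Delta>" unfolding \<Delta>_def using lk0 by simp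
  have lamk_le: "\<And>i. lamk \<le> lam i" unfolding lamk_def by (rule Min_le) auto
  have iL: "spnorm (matrix_inv Lam) \<le> 1/lamk"
    by (rule inv_bound(3)[OF lk0]) (unfold Lam_def, rule diag_lower, use lk0 lamk_le in auto)
  have cD0: "0 < c * \<Delta>" using sc(1) cc by simp
  have cD1: "c * \<Delta> \<le> 1/32" using sc(2) unfolding cc by simp
  have Xo: "transpose (X t) ** X t = mat 1" for t
  proof (cases t)
    case 0 thus ?thesis using X0 by simp
  next
    case (Suc n)
    show ?thesis
    proof (cases n)
      case 0 thus ?thesis using step1 Suc unfolding is_QR_def by simp
    next
      case (Suc m)
      have "n \<ge> 1" using Suc by simp
      from step[OF this] show ?thesis using \<open>t = Suc n\<close> unfolding is_QR_def by simp
    qed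
  qed
  have Eb: "spnorm (E t) \<le> c * \<Delta>" for t
  proof -
    let ?M = "transpose Uk ** X t"
    let ?N = "transpose Uk ** Xi t"
    have con: "norm (?M *v x) \<le> norm x" for x
    proof -
      have "norm (?M *v x) = norm (transpose Uk *v (X t *v x))" by (simp add: matrix_vector_mul_assoc)
      also have "\<dots> \<le> norm (X t *v x)" by (rule orth_contract[OF Uk_orth])
      also have "\<dots> = norm x" by (rule orth_isometry[OF Xo])
      finally show ?thesis .
    qed
    define \<sigma> where "\<sigma> = sigma_min ?M"
    have s0: "0 \<le> \<sigma>" unfolding \<sigma>_def by (rule sm_nonneg)
    have s1: "\<sigma> \<le> 1" unfolding \<sigma>_def by (rule sm_le1) (rule con)
    have cs: "cos (theta_k Uk (X t)) = \<sigma>" unfolding theta_k_def \<sigma>_def[symmetric]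
      using s0 s1 by (simp add: cos_arccos)
    have nN: "spnorm ?N \<le> c * lamk * \<Delta> * \<sigma>" using noise_k[of t] unfolding cs lkD
      by (simp add: algebra_simps)
    have EE: "E t = matrix_inv Lam ** ?N ** matrix_inv ?M" unfolding E_def ..
    have "spnorm (E t) \<le> spnorm (matrix_inv Lam ** ?N) * spnorm (matrix_inv ?M)"
      unfolding EE by (rule spn_mult)
    also have "\<dots> \<le> spnorm (matrix_inv Lam) * spnorm ?N * spnorm (matrix_inv ?M)"
      by (rule mult_right_mono[OF spn_mult spn_nonneg])
    finally have E1: "spnorm (E t) \<le> spnorm (matrix_inv Lam) * spnorm ?N * spnorm (matrix_inv ?M)" .
    show ?thesis
    proof (cases "\<sigma> > 0")
      case True
      have iM: "spnorm (matrix_inv ?M) \<le> 1/\<sigma>"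
        by (rule inv_bound(3)[OF True]) (unfold \<sigma>_def, rule sm_lower)
      have "spnorm (matrix_inv Lam) * spnorm ?N * spnorm (matrix_inv ?M)
          \<le> (1/lamk) * (c * lamk * \<Delta> * \<sigma>) * (1/\<sigma>)"
        by (intro mult_mono iL nN iM spn_nonneg mult_nonneg_nonneg) (use lk0 cc sc(1) s0 in auto)
      also have "\<dots> = c * \<Delta>" using True lk0 by simp
      finally show ?thesis using E1 by simp
    next
      case False
      hence "\<sigma> = 0" using s0 by simp
      hence "spnorm ?N = 0" using nN spn_nonneg[of ?N] by simp
      thus ?thesis using E1 cD0 by simp
    qed
  qed
  define s where "s t = rp^t + \<kappa> * rm^t" for t
  have spos: "s t > 0" for t unfolding s_def using sc(4,5,6) by (simp add: add_pos_nonneg)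
  define b where "b = \<beta> / lamk^2"
  have srec: "s (Suc (Suc t)) = (1 - c*\<Delta>) * s (Suc t) - b * s t" for t
  proof -
    have p: "x^(Suc (Suc t)) = (rp + rm) * x^(Suc t) - rp*rm * x^t" if "x = rp \<or> x = rm" for x
      using that by (auto simp: algebra_simps)
    show ?thesis unfolding s_def b_def sc(7)[symmetric] sc(8)[symmetric]
      using p[of rp] p[of rm] by (simp add: algebra_simps)
  qed
  have s1: "s 1 = (1/2 - c*\<Delta>) * s 0" unfolding s_def using sc(9) by simp
  have main: "spnorm (Gseq Lam \<beta> E t) \<le> s t / s (t+1)" for t
  proof (induction t)
    case 0
    have "spnorm (Gseq Lam \<beta> E 0) \<le> 1/(1/2 - c*\<Delta>)"
      unfolding Gseq.simps
    proof (rule perturb_inv)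
      fix x show "norm (E 0 *v x) \<le> c*\<Delta> * norm x"
        by (rule order_trans[OF spn_apply mult_right_mono[OF Eb norm_ge_zero]])
    next
      show "1/2 - c*\<Delta> > 0" using cD1 by simp
    qed
    also have "\<dots> = s 0 / s (0+1)" using s1 spos[of 0] cD1 by simp
    finally show ?case .
  next
    case (Suc t)
    let ?F = "matrix_inv Lam ** Gseq Lam \<beta> E t ** matrix_inv Lam"
    let ?g = "s t / s (t+1)"
    have g0: "0 \<le> ?g" using spos[of t] spos[of "t+1"] by simp
    have sF: "spnorm ?F \<le> (1/lamk) * ?g * (1/lamk)"
    proof -
      have "spnorm ?F \<le> spnorm (matrix_inv Lam ** Gseq Lam \<beta> E t) * spnorm (matrix_inv Lam)"
        by (rule spn_mult)
      also have "\<dots> \<le> spnorm (matrix_inv Lam) * spnorm (Gseq Lam \<beta> E t) * spnorm (matrix_inv Lam)"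
        by (rule mult_right_mono[OF spn_mult spn_nonneg])
      also have "\<dots> \<le> (1/lamk) * ?g * (1/lamk)"
        by (intro mult_mono iL Suc.IH spn_nonneg mult_nonneg_nonneg g0) (use lk0 in auto)
      finally show ?thesis .
    qed
    have eq: "mat 1 - \<beta> *\<^sub>R ?F + E (Suc t) = 1 *\<^sub>R mat 1 + (E (Suc t) - \<beta> *\<^sub>R ?F)" by simp
    have bg: "\<beta> * ((1/lamk) * ?g * (1/lamk)) = b * ?g" unfolding b_def by (simp add: power2_eq_square)
    have "spnorm (Gseq Lam \<beta> E (Suc t)) \<le> 1/(1 - (c*\<Delta> + b * ?g))"
      unfolding Gseq.simps eq
    proof (rule perturb_inv)
      fix x
      have "norm ((E (Suc t) - \<beta> *\<^sub>R ?F) *v x) \<le> norm (E (Suc t) *v x) + \<beta> * norm (?F *v x)"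
        using norm_triangle_ineq4[of "E (Suc t) *v x" "\<beta> *\<^sub>R (?F *v x)"] beta(1)
        by (simp add: matrix_vector_mult_diff_rdistrib scaleR_matrix_vector_assoc[symmetric])
      also have "\<dots> \<le> c*\<Delta> * norm x + \<beta> * (((1/lamk) * ?g * (1/lamk)) * norm x)"
        by (intro add_mono mult_left_mono order_trans[OF spn_apply mult_right_mono[OF Eb norm_ge_zero]]
              order_trans[OF spn_apply mult_right_mono[OF sF norm_ge_zero]]) (use beta(1) in auto)
      also have "\<dots> = (c*\<Delta> + b * ?g) * norm x"
      proof -
        have "\<beta> * (((1/lamk) * ?g * (1/lamk)) * norm x) = b * ?g * norm x"
          using bg by (metis mult.assoc)
        thus ?thesis by (simp add: distrib_right)
      qed
      finally show "norm ((E (Suc t) - \<beta> *\<^sub>R ?F) *v x) \<le> (c*\<Delta> + b * ?g) * norm x" .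
    next
      have "1 - (c*\<Delta> + b * ?g) = s (t+2) / s (t+1)"
        using srec[of t] spos[of "t+1"] by (simp add: field_simps)
      thus "1 - (c*\<Delta> + b * ?g) > 0" using spos by simp
    qed
    also have "\<dots> = s (Suc t) / s (Suc t + 1)"
      using srec[of t] spos[of "t+1"] spos[of "t+2"] by (simp add: field_simps)
    finally show ?case .
  qed
  show ?thesis using main sc(3) unfolding s_def by simp
qed

end
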